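(* Let $f:\mathbb{R}^n\to\mathbb{R}$, $\bar x\in\mathbb{R}^n$, $a\in\mathbb{R}$, $\Delta>0$, let $I$ be a finite index set, and for $i\in I$ let $y_i\in\mathbb{R}^n$ and $s_i\in\partial f(y_i)$. For $w\in\mathbb{R}^n$ put $$h(w;\bar x,a,y_i)=f(y_i)+\tfrac a2\|y_i-\bar x\|_2^2+\langle s_i+a(y_i-\bar x),w-y_i\rangle,\qquad m(w)=\max_{i\in I}h(w;\bar x,a,y_i),$$ and $E_i=f(\bar x)-h(\bar x;\bar x,a,y_i)$ for $i\in I$. Assume there is $\bar i\in I$ with $y_{\bar i}=\bar x$ and that $E_i\ge0$ for all $i\in I$. Let $(x^*,z^* )$ be an optimal solution of the linear program $$\min_{(x,z)\in\mathbb{R}^{n+1}} z\quad\text{s.t.}\quad h(x;\bar x,a,y_i)\le z\ (i\in I),\qquad \|x-\bar x\|_\infty\le\Delta,$$ let $\bar I=\{i\in I: h(x^*;\bar x,a,y_i)=z^*\}$ be the set of active cutting-plane constraints, and let $\lambda_i$, $i\in\bar I$, be the Lagrange multipliers of these active constraints in a Karush–Kuhn–Tucker system for this linear program at $(x^*,z^* )$. (i) Then $$m(\bar x)-m(x^* )=f(\bar x)-z^*=\begin{cases}\sum_{i\in\bar I}\lambda_iE_i, & \text{if }\|x^*-\bar x\|_\infty<\Delta,\\[2pt] \sum_{i\in\bar I}\lambda_iE_i+\Delta\Big\|\sum_{i\in\bar I}\lambda_i[s_i+a(y_i-\bar x)]\Big\|_1, & \text{if }\|x^*-\bar x\|_\infty=\Delta.\end{cases}$$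 (ii) Let $C\subseteq\mathbb{R}^n$ be any set with $\bar x\in\mathrm{int}\,C$ and $y_i\in\mathrm{int}\,C$ for all $i\in\bar I$, and suppose additionally that $a$ is such that, with $g(y;x,a)=f(y)+\frac a2\|y-x\|_2^2$, for every $x\in\mathbb{R}^n$ the function $g(\cdot;x,a)$ is the restriction to $C$ of a convex function $H(\cdot;x,a):\mathbb{R}^n\to\mathbb{R}$ satisfying $g(y;x,a)\ge H(y;x,a)$ for all $y\in\mathbb{R}^n$. Then $$\sum_{i\in\bar I}\lambda_i[s_i+a(y_i-\bar x)]\in\partial_{\tilde\epsilon}g(\bar x;\bar x,a),\qquad \tilde\epsilon=\sum_{i\in\bar I}\lambda_iE_i;$$ and furthermore, if $0\in\partial_0 g(\bar x;\bar x,a)$, then $\bar x$ is a global minimizer of $g(\cdot;\bar x,a)$ on $\mathbb{R}^n$.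
   Context: $\partial f$ denotes the basic (limiting) subdifferential. $\|\cdot\|_1,\|\cdot\|_2,\|\cdot\|_\infty$ are the one, two and infinity norms. For a point $y\in\mathrm{int}\,C$, the $\epsilon$-subdifferential of $g(\cdot;\bar x,a)$ is defined as that of the convex function $H(\cdot;\bar x,a)$: $\partial_\epsilon g(y;\bar x,a):=\{v\in\mathbb{R}^n: H(z;\bar x,a)\ge H(y;\bar x,a)+\langle v,z-y\rangle-\epsilon\ \forall z\in\mathbb{R}^n\}$. *)

theory Defs
  imports "HOL-Analysis.Analysis"
begin

text \<open>Vectors of R^n are modelled as real^'n. The infinity norm is the library's infnorm.\<close>

definition norm1 :: "real ^ 'n \<Rightarrow> real" where
  "norm1 x = (\<Sum>j\<in>UNIV. \<bar>x $ j\<bar>)"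

definition frechet_subdiff :: "(real ^ 'n \<Rightarrow> real) \<Rightarrow> real ^ 'n \<Rightarrow> (real ^ 'n) set" where
  "frechet_subdiff f x = {v. \<forall>e>0. \<exists>d>0. \<forall>y. norm (y - x) < d \<longrightarrow>
       f y \<ge> f x + inner v (y - x) - e * norm (y - x)}"

definition limiting_subdiff :: "(real ^ 'n \<Rightarrow> real) \<Rightarrow> real ^ 'n \<Rightarrow> (real ^ 'n) set" where
  "limiting_subdiff f x = {v. \<exists>xk vk. xk \<longlonglongrightarrow> x \<and> (\<lambda>k. f (xk k)) \<longlonglongrightarrow> f x \<and>
       vk \<longlonglongrightarrow> v \<and> (\<forall>k. vk k \<in> frechet_subdiff f (xk k))}"

definition eps_subdiff :: "(real ^ 'n \<Rightarrow> real) \<Rightarrow> real \<Rightarrow> real ^ 'n \<Rightarrow> (real ^ 'n) set" where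
  "eps_subdiff H eps y = {v. \<forall>z. H z \<ge> H y + inner v (z - y) - eps}"

definition hcut :: "(real ^ 'n \<Rightarrow> real) \<Rightarrow> real ^ 'n \<Rightarrow> real \<Rightarrow> real ^ 'n \<Rightarrow> real ^ 'n \<Rightarrow> real ^ 'n \<Rightarrow> real" where
  "hcut f xbar a y s w = f y + a / 2 * (norm (y - xbar))\<^sup>2 + inner (s + a *\<^sub>R (y - xbar)) (w - y)"

definition gprox :: "(real ^ 'n \<Rightarrow> real) \<Rightarrow> real ^ 'n \<Rightarrow> real \<Rightarrow> real ^ 'n \<Rightarrow> real" where
  "gprox f x a y = f y + a / 2 * (norm (y - x))\<^sup>2"

definition lp_feasible :: "'i set \<Rightarrow> ('i \<Rightarrow> real ^ 'n \<Rightarrow> real) \<Rightarrow> real ^ 'n \<Rightarrow> real \<Rightarrow> real ^ 'n \<Rightarrow> real \<Rightarrow> bool" where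
  "lp_feasible I h xbar Delta x z \<longleftrightarrow> (\<forall>i\<in>I. h i x \<le> z) \<and> infnorm (x - xbar) \<le> Delta"

text \<open>KKT system of the LP  min z  s.t.  h_i(x) - z \<le> 0 (i \<in> I),
  (x_j - xbar_j) - Delta \<le> 0, -(x_j - xbar_j) - Delta \<le> 0 (all j),
  at (x,z), with multipliers lam_i (cutting planes), mup_j, mum_j (box constraints).
  The gradient of h_i in x is g i.\<close>
definition lp_kkt :: "'i set \<Rightarrow> ('i \<Rightarrow> real ^ 'n \<Rightarrow> real) \<Rightarrow> ('i \<Rightarrow> real ^ 'n) \<Rightarrow> real ^ 'n \<Rightarrow> real
      \<Rightarrow> real ^ 'n \<Rightarrow> real \<Rightarrow> ('i \<Rightarrow> real) \<Rightarrow> real ^ 'n \<Rightarrow> real ^ 'n \<Rightarrow> bool" where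
  "lp_kkt I h g xbar Delta x z lam mup mum \<longleftrightarrow>
     lp_feasible I h xbar Delta x z \<and>
     (\<forall>i\<in>I. lam i \<ge> 0) \<and> (\<forall>j. mup $ j \<ge> 0 \<and> mum $ j \<ge> 0) \<and>
     1 - (\<Sum>i\<in>I. lam i) = 0 \<and>
     (\<Sum>i\<in>I. lam i *\<^sub>R g i) + mup - mum = 0 \<and>
     (\<forall>i\<in>I. lam i * (h i x - z) = 0) \<and>
     (\<forall>j. mup $ j * ((x - xbar) $ j - Delta) = 0) \<and>
     (\<forall>j. mum $ j * (- (x - xbar) $ j - Delta) = 0)"

end

theory Submission
  imports Defs
begin

lemma frechet_convex_global:
  fixes phi :: "'a::euclidean_space \<Rightarrow> real"
  assumes conv: "convex_on UNIV phi"
    and fr: "\<forall>e>0. \<exists>d>0. \<forall>u. norm (u - x) < d \<longrightarrow> phi u \<ge> phi x + inner w (u - x) - e * norm (u - x)"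
  shows "phi z \<ge> phi x + inner w (z - x)"
proof (rule ccontr)
  assume na: "\<not> phi z \<ge> phi x + inner w (z - x)"
  define del where "del = phi x + inner w (z - x) - phi z"
  have del: "del > 0" using na by (simp add: del_def)
  have zx: "z \<noteq> x" using del by (auto simp: del_def)
  define n where "n = norm (z - x)"
  have n: "n > 0" using zx by (simp add: n_def)
  define e where "e = del / (2 * n)"
  have e: "e > 0" using del n by (simp add: e_def)
  obtain d where d: "d > 0" "\<forall>u. norm (u - x) < d \<longrightarrow> phi u \<ge> phi x + inner w (u - x) - e * norm (u - x)"
    using fr e by blast
  define t where "t = min 1 (d / (2 * n))"
  have t: "t > 0" "t \<le> 1" using d n by (auto simp: t_def)
  have "t \<le> d / (2 * n)" by (simp add: t_def)
  hence "t * n \<le> d / (2 * n) * n" using n by (intro mult_right_mono) auto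
  also have "\<dots> = d / 2" using n by simp
  finally have tn: "t * n < d" using d by linarith
  define u where "u = x + t *\<^sub>R (z - x)"
  have un: "norm (u - x) = t * n" using t by (simp add: u_def n_def)
  have "phi u \<ge> phi x + inner w (u - x) - e * norm (u - x)" using d(2)[rule_format, of u] tn un by simp
  hence 1: "phi u \<ge> phi x + t * inner w (z - x) - e * (t * n)" using un by (simp add: u_def)
  have "u = (1 - t) *\<^sub>R x + t *\<^sub>R z" by (simp add: u_def algebra_simps)
  hence 2: "phi u \<le> (1 - t) * phi x + t * phi z" using convex_onD[OF conv, of t x z] t by simp
  from 1 2 have "t * phi z - t * phi x \<ge> t * inner w (z - x) - t * (e * n)" by (simp add: algebra_simps)
  hence "t * (phi z - phi x) \<ge> t * (inner w (z - x) - e * n)" by (simp add: algebra_simps)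
  hence "phi z - phi x \<ge> inner w (z - x) - e * n" using t by (simp add: mult_le_cancel_left)
  moreover have "e * n = del / 2" using n by (simp add: e_def)
  ultimately have "phi z - phi x \<ge> inner w (z - x) - del / 2" by simp
  thus False using del unfolding del_def by (simp add: field_simps)
qed

lemma norm_sq_expand:
  fixes u x c :: "'a::real_inner"
  shows "(norm (u - c))\<^sup>2 = (norm (x - c))\<^sup>2 + 2 * inner (x - c) (u - x) + (norm (u - x))\<^sup>2"
proof -
  have "u - c = (x - c) + (u - x)" by simp
  hence "(norm (u - c))\<^sup>2 = (norm ((x - c) + (u - x)))\<^sup>2" by simp
  also have "\<dots> = (norm (x - c))\<^sup>2 + 2 * inner (x - c) (u - x) + (norm (u - x))\<^sup>2"
    by (simp only: power2_norm_eq_inner inner_add_left inner_add_right inner_commute)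
  finally show ?thesis .
qed

lemma frechet_H:
  fixes f H :: "real^'n \<Rightarrow> real"
  assumes xint: "x \<in> interior C" and eq: "\<forall>u\<in>C. H u = gprox f c a u"
    and v: "v \<in> frechet_subdiff f x"
  shows "\<forall>e>0. \<exists>d>0. \<forall>u. norm (u - x) < d \<longrightarrow> H u \<ge> H x + inner (v + a *\<^sub>R (x - c)) (u - x) - e * norm (u - x)"
proof (intro allI impI)
  fix e :: real assume e: "e > 0"
  obtain r where r: "r > 0" "ball x r \<subseteq> C" using mem_interior[THEN iffD1, OF xint] by blast
  have vv: "\<forall>e>0. \<exists>d>0. \<forall>y. norm (y - x) < d \<longrightarrow> f y \<ge> f x + inner v (y - x) - e * norm (y - x)"
    using v by (simp add: frechet_subdiff_def)
  have e2: "e / 2 > 0" using e by simp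
  obtain d1 where d1: "d1 > 0" "\<forall>u. norm (u - x) < d1 \<longrightarrow> f u \<ge> f x + inner v (u - x) - (e/2) * norm (u - x)"
    using vv[rule_format, OF e2] by blast
  define d where "d = min (min d1 r) (e / (\<bar>a\<bar> + 1))"
  have d: "d > 0" using d1 r e by (simp add: d_def)
  show "\<exists>d>0. \<forall>u. norm (u - x) < d \<longrightarrow> H u \<ge> H x + inner (v + a *\<^sub>R (x - c)) (u - x) - e * norm (u - x)"
  proof (intro exI conjI allI impI, rule d)
    fix u assume un: "norm (u - x) < d"
    define n where "n = norm (u - x)"
    have n0: "n \<ge> 0" by (simp add: n_def)
    have "dist x u < r" using un by (simp add: d_def dist_norm norm_minus_commute)
    hence uC: "u \<in> C" using r by auto
    have xC: "x \<in> C" using xint interior_subset by blast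
    have "n < d1" using un by (simp add: d_def n_def)
    hence fu: "f u \<ge> f x + inner v (u - x) - (e/2) * n" using d1(2) by (simp add: n_def)
    have "n < e / (\<bar>a\<bar> + 1)" using un by (simp add: n_def d_def)
    hence "n * (\<bar>a\<bar> + 1) < e" by (simp add: pos_less_divide_eq)
    moreover have "n * (\<bar>a\<bar> + 1) = \<bar>a\<bar> * n + n" by (simp add: algebra_simps)
    ultimately have an: "\<bar>a\<bar> * n \<le> e" using n0 by linarith
    have "\<bar>a\<bar> * n * n \<le> e * n" using an n0 by (rule mult_right_mono)
    moreover have "(- \<bar>a\<bar>) * (n * n) \<le> a * (n * n)" by (rule mult_right_mono) (simp_all add: n0)
    ultimately have q: "a / 2 * n\<^sup>2 \<ge> - (e/2) * n" by (simp add: power2_eq_square algebra_simps)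
    have "H u = f u + a / 2 * (norm (u - c))\<^sup>2" using eq uC by (simp add: gprox_def)
    also have "\<dots> = f u + a / 2 * (norm (x - c))\<^sup>2 + a * inner (x - c) (u - x) + a / 2 * n\<^sup>2"
      by (simp add: norm_sq_expand[of u c x] n_def algebra_simps)
    finally have "H u = f u + a / 2 * (norm (x - c))\<^sup>2 + a * inner (x - c) (u - x) + a / 2 * n\<^sup>2" .
    moreover have "H x = f x + a / 2 * (norm (x - c))\<^sup>2" using eq xC by (simp add: gprox_def)
    ultimately show "H u \<ge> H x + inner (v + a *\<^sub>R (x - c)) (u - x) - e * norm (u - x)"
      using fu q by (simp add: inner_add_left n_def algebra_simps)
  qed
qed

lemma limiting_global:
  fixes f H :: "real^'n \<Rightarrow> real"
  assumes conv: "convex_on UNIV H" and eq: "\<forall>u\<in>C. H u = gprox f c a u"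
    and yint: "y \<in> interior C" and sl: "s \<in> limiting_subdiff f y"
  shows "H z \<ge> H y + inner (s + a *\<^sub>R (y - c)) (z - y)"
proof -
  obtain xk vk where xk: "xk \<longlonglongrightarrow> y" and vk: "vk \<longlonglongrightarrow> s" and fr: "\<forall>k. vk k \<in> frechet_subdiff f (xk k)"
    using sl unfolding limiting_subdiff_def by blast
  have ev: "eventually (\<lambda>k. xk k \<in> interior C) sequentially"
    using topological_tendstoD[OF xk open_interior yint] .
  have cont: "continuous_on UNIV H" using convex_on_continuous[OF open_UNIV conv] .
  have Hlim: "(\<lambda>k. H (xk k)) \<longlonglongrightarrow> H y"
    using cont xk by (metis UNIV_I continuous_on_def filterlim_compose tendsto_at_iff_tendsto_nhds)
  have lim: "(\<lambda>k. H (xk k) + inner (vk k + a *\<^sub>R (xk k - c)) (z - xk k)) \<longlonglongrightarrow> H y + inner (s + a *\<^sub>R (y - c)) (z - y)"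
    by (intro tendsto_intros Hlim vk xk)
  show ?thesis
  proof (rule tendsto_le[OF _ tendsto_const lim])
    show "sequentially \<noteq> bot" by simp
    show "eventually (\<lambda>k. H (xk k) + inner (vk k + a *\<^sub>R (xk k - c)) (z - xk k) \<le> H z) sequentially"
      using ev
    proof (rule eventually_mono)
      fix k assume "xk k \<in> interior C"
      from frechet_convex_global[OF conv frechet_H[OF this eq fr[rule_format, of k]]]
      show "H (xk k) + inner (vk k + a *\<^sub>R (xk k - c)) (z - xk k) \<le> H z" .
    qed
  qed
qed

theorem lemma2:
  fixes f :: "real ^ 'n \<Rightarrow> real"
    and xbar :: "real ^ 'n" and a Delta :: real
    and I :: "'i set" and y s :: "'i \<Rightarrow> real ^ 'n"
    and ibar :: 'i
    and xs :: "real ^ 'n" and zs :: real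
    and lam :: "'i \<Rightarrow> real" and mup mum :: "real ^ 'n"
  defines "h \<equiv> (\<lambda>i w. hcut f xbar a (y i) (s i) w)"
    and "m \<equiv> (\<lambda>w. Max ((\<lambda>i. hcut f xbar a (y i) (s i) w) ` I))"
    and "E \<equiv> (\<lambda>i. f xbar - hcut f xbar a (y i) (s i) xbar)"
    and "Ibar \<equiv> {i \<in> I. hcut f xbar a (y i) (s i) xs = zs}"
  assumes Delta_pos: "Delta > 0"
    and I_fin: "finite I"
    and subgrad: "\<forall>i\<in>I. s i \<in> limiting_subdiff f (y i)"
    and ibar: "ibar \<in> I" "y ibar = xbar"
    and E_nonneg: "\<forall>i\<in>I. E i \<ge> 0"
    and opt: "lp_feasible I h xbar Delta xs zs"
             "\<forall>x z. lp_feasible I h xbar Delta x z \<longrightarrow> zs \<le> z"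
    and kkt: "lp_kkt I h (\<lambda>i. s i + a *\<^sub>R (y i - xbar)) xbar Delta xs zs lam mup mum"
  shows "m xbar - m xs = f xbar - zs
       \<and> (infnorm (xs - xbar) < Delta \<longrightarrow> f xbar - zs = (\<Sum>i\<in>Ibar. lam i * E i))
       \<and> (infnorm (xs - xbar) = Delta \<longrightarrow>
            f xbar - zs = (\<Sum>i\<in>Ibar. lam i * E i)
              + Delta * norm1 (\<Sum>i\<in>Ibar. lam i *\<^sub>R (s i + a *\<^sub>R (y i - xbar))))
       \<and> (\<forall>(C :: (real ^ 'n) set) (H :: real ^ 'n \<Rightarrow> real ^ 'n \<Rightarrow> real).
            xbar \<in> interior C \<and> (\<forall>i\<in>Ibar. y i \<in> interior C) \<and>
            (\<forall>x. convex_on UNIV (H x) \<and> (\<forall>u\<in>C. H x u = gprox f x a u)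
                 \<and> (\<forall>u. gprox f x a u \<ge> H x u))
            \<longrightarrow> (\<Sum>i\<in>Ibar. lam i *\<^sub>R (s i + a *\<^sub>R (y i - xbar)))
                   \<in> eps_subdiff (H xbar) (\<Sum>i\<in>Ibar. lam i * E i) xbar
              \<and> (0 \<in> eps_subdiff (H xbar) 0 xbar \<longrightarrow> (\<forall>u. gprox f xbar a xbar \<le> gprox f xbar a u)))"
proof -
  define g where "g = (\<lambda>i. s i + a *\<^sub>R (y i - xbar))"
  have hc: "\<And>i w1 w2. hcut f xbar a (y i) (s i) w1 - hcut f xbar a (y i) (s i) w2 = inner (g i) (w1 - w2)"
    by (simp add: hcut_def g_def inner_diff_right)
  have feas: "\<forall>i\<in>I. h i xs \<le> zs" "infnorm (xs - xbar) \<le> Delta" using opt(1) by (auto simp: lp_feasible_def)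
  have lam_nn: "\<forall>i\<in>I. lam i \<ge> 0" and mu_nn: "\<forall>j. mup $ j \<ge> 0 \<and> mum $ j \<ge> 0"
    and lsum: "(\<Sum>i\<in>I. lam i) = 1" and gsum: "(\<Sum>i\<in>I. lam i *\<^sub>R g i) + mup - mum = 0"
    and cs: "\<forall>i\<in>I. lam i * (h i xs - zs) = 0"
    and cp: "\<forall>j. mup $ j * ((xs - xbar) $ j - Delta) = 0"
    and cm: "\<forall>j. mum $ j * (- (xs - xbar) $ j - Delta) = 0"
    using kkt unfolding lp_kkt_def g_def by auto
  have Ibar_sub: "Ibar \<subseteq> I" by (auto simp: Ibar_def)
  have lam0: "\<And>i. i \<in> I - Ibar \<Longrightarrow> lam i = 0" using cs by (auto simp: Ibar_def h_def)
  have S1: "(\<Sum>i\<in>Ibar. lam i) = 1"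
    using lsum sum.mono_neutral_right[OF I_fin Ibar_sub, of lam] lam0 by auto
  have G: "(\<Sum>i\<in>Ibar. lam i *\<^sub>R g i) = mum - mup"
  proof -
    have "(\<Sum>i\<in>I. lam i *\<^sub>R g i) = (\<Sum>i\<in>Ibar. lam i *\<^sub>R g i)"
      using sum.mono_neutral_right[OF I_fin Ibar_sub, of "\<lambda>i. lam i *\<^sub>R g i"] lam0 by auto
    thus ?thesis using gsum by (simp add: algebra_simps eq_diff_eq)
  qed
  have key: "f xbar - zs = (\<Sum>i\<in>Ibar. lam i * E i) + inner (mum - mup) (xbar - xs)"
  proof -
    have "f xbar - zs = (\<Sum>i\<in>Ibar. lam i * (f xbar - zs))" using S1 by (simp add: sum_distrib_right[symmetric])
    also have "\<dots> = (\<Sum>i\<in>Ibar. lam i * E i + lam i * inner (g i) (xbar - xs))"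
    proof (rule sum.cong[OF refl])
      fix i assume "i \<in> Ibar"
      hence "hcut f xbar a (y i) (s i) xs = zs" by (simp add: Ibar_def)
      hence "f xbar - zs = E i + inner (g i) (xbar - xs)" using hc[of i xbar xs] by (simp add: E_def)
      thus "lam i * (f xbar - zs) = lam i * E i + lam i * inner (g i) (xbar - xs)" by (metis distrib_left)
    qed
    also have "\<dots> = (\<Sum>i\<in>Ibar. lam i * E i) + inner (\<Sum>i\<in>Ibar. lam i *\<^sub>R g i) (xbar - xs)"
      by (simp add: sum.distrib inner_sum_left)
    finally show ?thesis using G by simp
  qed
  have comp: "\<And>j. (mum $ j - mup $ j) * (xbar - xs) $ j = Delta * \<bar>(mum - mup) $ j\<bar>"
  proof -
    fix j
    have p: "mup $ j \<ge> 0" "mum $ j \<ge> 0" using mu_nn by auto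
    have q1: "mup $ j * ((xs - xbar) $ j - Delta) = 0" using cp by auto
    have q2: "mum $ j * (- (xs - xbar) $ j - Delta) = 0" using cm by auto
    show "(mum $ j - mup $ j) * (xbar - xs) $ j = Delta * \<bar>(mum - mup) $ j\<bar>"
    proof (cases "mup $ j = 0")
      case True
      show ?thesis
      proof (cases "mum $ j = 0")
        case True thus ?thesis using \<open>mup $ j = 0\<close> by simp
      next
        case False
        hence "- (xs - xbar) $ j - Delta = 0" using q2 by simp
        thus ?thesis using True p by (simp add: algebra_simps)
      qed
    next
      case False
      hence d: "(xs - xbar) $ j = Delta" using q1 by simp
      hence "mum $ j = 0" using q2 Delta_pos by simp
      thus ?thesis using d p by (simp add: algebra_simps)
    qed
  qed
  have box: "inner (mum - mup) (xbar - xs) = Delta * norm1 (mum - mup)"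
    unfolding inner_vec_def norm1_def sum_distrib_left
    by (rule sum.cong[OF refl]) (metis comp inner_real_def vector_minus_component)
  have box0: "infnorm (xs - xbar) < Delta \<Longrightarrow> norm1 (mum - mup) = 0"
  proof -
    assume lt: "infnorm (xs - xbar) < Delta"
    have "\<And>j. mup $ j = 0 \<and> mum $ j = 0"
    proof -
      fix j
      have "\<bar>(xs - xbar) $ j\<bar> < Delta" using component_le_infnorm_cart[of "xs - xbar" j] lt by linarith
      hence n1: "(xs - xbar) $ j - Delta \<noteq> 0" and n2: "- (xs - xbar) $ j - Delta \<noteq> 0" by auto
      have "mup $ j * ((xs - xbar) $ j - Delta) = 0" "mum $ j * (- (xs - xbar) $ j - Delta) = 0" using cp cm by blast+
      thus "mup $ j = 0 \<and> mum $ j = 0" using n1 n2 by simp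
    qed
    thus ?thesis by (simp add: norm1_def)
  qed
  have Gn: "(\<Sum>i\<in>Ibar. lam i *\<^sub>R (s i + a *\<^sub>R (y i - xbar))) = mum - mup" using G by (simp add: g_def)
  have Inz: "I \<noteq> {}" using ibar by auto
  have mx: "m xbar = f xbar"
  proof -
    have "Max ((\<lambda>i. hcut f xbar a (y i) (s i) xbar) ` I) = f xbar"
    proof (rule Max_eqI)
      show "finite ((\<lambda>i. hcut f xbar a (y i) (s i) xbar) ` I)" using I_fin by simp
      show "\<And>v. v \<in> (\<lambda>i. hcut f xbar a (y i) (s i) xbar) ` I \<Longrightarrow> v \<le> f xbar"
        using E_nonneg by (auto simp: E_def)
      show "f xbar \<in> (\<lambda>i. hcut f xbar a (y i) (s i) xbar) ` I"
        using ibar by (auto simp: hcut_def intro!: image_eqI[of _ _ ibar])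
    qed
    thus ?thesis by (simp add: m_def)
  qed
  have ms: "m xs = zs"
  proof -
    have fin: "finite ((\<lambda>i. hcut f xbar a (y i) (s i) xs) ` I)" using I_fin by simp
    have le: "m xs \<le> zs" unfolding m_def using fin Inz feas(1) by (auto simp: h_def)
    have "lp_feasible I h xbar Delta xs (m xs)"
      unfolding lp_feasible_def m_def h_def using fin feas(2) by auto
    hence "zs \<le> m xs" using opt(2) by blast
    thus ?thesis using le by simp
  qed
  have part2: "\<forall>(C :: (real ^ 'n) set) (H :: real ^ 'n \<Rightarrow> real ^ 'n \<Rightarrow> real).
            xbar \<in> interior C \<and> (\<forall>i\<in>Ibar. y i \<in> interior C) \<and>
            (\<forall>x. convex_on UNIV (H x) \<and> (\<forall>u\<in>C. H x u = gprox f x a u)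
                 \<and> (\<forall>u. gprox f x a u \<ge> H x u))
            \<longrightarrow> (\<Sum>i\<in>Ibar. lam i *\<^sub>R (s i + a *\<^sub>R (y i - xbar)))
                   \<in> eps_subdiff (H xbar) (\<Sum>i\<in>Ibar. lam i * E i) xbar
              \<and> (0 \<in> eps_subdiff (H xbar) 0 xbar \<longrightarrow> (\<forall>u. gprox f xbar a xbar \<le> gprox f xbar a u))"
  proof (intro allI impI conjI)
    fix C :: "(real ^ 'n) set" and H :: "real ^ 'n \<Rightarrow> real ^ 'n \<Rightarrow> real"
    assume A: "xbar \<in> interior C \<and> (\<forall>i\<in>Ibar. y i \<in> interior C) \<and>
            (\<forall>x. convex_on UNIV (H x) \<and> (\<forall>u\<in>C. H x u = gprox f x a u)
                 \<and> (\<forall>u. gprox f x a u \<ge> H x u))"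
    have conv: "convex_on UNIV (H xbar)" and eq: "\<forall>u\<in>C. H xbar u = gprox f xbar a u"
      and below: "\<forall>u. gprox f xbar a u \<ge> H xbar u" using A by auto
    have xC: "xbar \<in> C" using A interior_subset by blast
    have Hx: "H xbar xbar = f xbar" using eq xC by (simp add: gprox_def)
    show "(\<Sum>i\<in>Ibar. lam i *\<^sub>R (s i + a *\<^sub>R (y i - xbar)))
                   \<in> eps_subdiff (H xbar) (\<Sum>i\<in>Ibar. lam i * E i) xbar"
      unfolding eps_subdiff_def mem_Collect_eq
    proof
      fix z
      have each: "\<And>i. i \<in> Ibar \<Longrightarrow> H xbar z \<ge> f xbar - E i + inner (g i) (z - xbar)"
      proof -
        fix i assume iI: "i \<in> Ibar"
        have yi: "y i \<in> interior C" using A iI by auto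
        have yC: "y i \<in> C" using yi interior_subset by blast
        have "H xbar z \<ge> H xbar (y i) + inner (s i + a *\<^sub>R (y i - xbar)) (z - y i)"
          by (rule limiting_global[OF conv eq yi]) (use subgrad iI Ibar_sub in auto)
        also have "H xbar (y i) + inner (s i + a *\<^sub>R (y i - xbar)) (z - y i) = hcut f xbar a (y i) (s i) z"
          using eq yC by (simp add: gprox_def hcut_def)
        also have "\<dots> = f xbar - E i + inner (g i) (z - xbar)" using hc[of i z xbar] by (simp add: E_def algebra_simps)
        finally show "H xbar z \<ge> f xbar - E i + inner (g i) (z - xbar)" .
      qed
      have lamI: "\<And>i. i \<in> Ibar \<Longrightarrow> lam i \<ge> 0" using lam_nn Ibar_sub by auto
      have le: "(\<Sum>i\<in>Ibar. lam i * (f xbar - E i + inner (g i) (z - xbar))) \<le> (\<Sum>i\<in>Ibar. lam i * H xbar z)"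
        by (rule sum_mono) (simp add: each lamI mult_left_mono)
      have e1: "(\<Sum>i\<in>Ibar. lam i * H xbar z) = H xbar z" using S1 by (simp add: sum_distrib_right[symmetric])
      have e2: "(\<Sum>i\<in>Ibar. lam i * f xbar) = f xbar" using S1 by (simp add: sum_distrib_right[symmetric])
      have "(\<Sum>i\<in>Ibar. lam i * (f xbar - E i + inner (g i) (z - xbar)))
          = (\<Sum>i\<in>Ibar. lam i * f xbar) - (\<Sum>i\<in>Ibar. lam i * E i) + (\<Sum>i\<in>Ibar. lam i * inner (g i) (z - xbar))"
        by (simp add: algebra_simps sum.distrib sum_subtractf)
      also have "(\<Sum>i\<in>Ibar. lam i * inner (g i) (z - xbar)) = inner (\<Sum>i\<in>Ibar. lam i *\<^sub>R g i) (z - xbar)"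
        by (simp add: inner_sum_left)
      finally have e3: "(\<Sum>i\<in>Ibar. lam i * (f xbar - E i + inner (g i) (z - xbar)))
          = f xbar - (\<Sum>i\<in>Ibar. lam i * E i) + inner (\<Sum>i\<in>Ibar. lam i *\<^sub>R g i) (z - xbar)" using e2 by simp
      show "H xbar z \<ge> H xbar xbar + inner (\<Sum>i\<in>Ibar. lam i *\<^sub>R (s i + a *\<^sub>R (y i - xbar))) (z - xbar) - (\<Sum>i\<in>Ibar. lam i * E i)"
        using le e1 e3 Hx by (simp add: g_def)
    qed
    show "gprox f xbar a xbar \<le> gprox f xbar a u" if "0 \<in> eps_subdiff (H xbar) 0 xbar" for u
    proof -
      have "H xbar u \<ge> H xbar xbar" using that by (simp add: eps_subdiff_def)
      moreover have "gprox f xbar a xbar = H xbar xbar" using eq xC by simp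
      ultimately show ?thesis using below by (metis order_trans)
    qed
  qed
  have c1: "m xbar - m xs = f xbar - zs" using mx ms by simp
  have c3: "f xbar - zs = (\<Sum>i\<in>Ibar. lam i * E i)
              + Delta * norm1 (\<Sum>i\<in>Ibar. lam i *\<^sub>R (s i + a *\<^sub>R (y i - xbar)))"
    using key box Gn by simp
  have c2: "infnorm (xs - xbar) < Delta \<longrightarrow> f xbar - zs = (\<Sum>i\<in>Ibar. lam i * E i)"
    using c3 box0 Gn by simp
  show ?thesis
    apply (intro conjI)
       apply (rule c1)
      apply (rule c2)
     apply (rule impI, rule c3)
    apply (rule part2)
    done
qed

end
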